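(* In the setting described in the context, assume $q$ is a square and let $v\ge1$ be an integer such that $d=v(q+\sqrt q+1)$ divides $q^2+q+1$, and let $t=(q^2+q+1)/d$. Then $t=\frac{q-\sqrt q+1}{v}$, $w_0=\sqrt q+v$, and $w_1=\dots=w_{t-1}=v$.
   Context: Let $q=p^h$ with $p$ prime, $h\ge1$. Let $\alpha$ be a primitive element of $\mathbb{F}_{q^3}$; the points of $PG(2,q)$ are the 1-dimensional $\mathbb{F}_q$-subspaces of $\mathbb{F}_{q^3}$, and $P_i$ denotes the point represented by $\alpha^i$, so $PG(2,q)=\{P_0,\dots,P_{q^2+q}\}$. Let $\tau:P_i\mapsto P_{ip\bmod(q^2+q+1)}$ (a collineation) and let $\ell_0$ be a line of $PG(2,q)$ fixed by $\tau$. For a positive divisor $t$ of $q^2+q+1$ and $i=0,\dots,t-1$ let $O_i=\{P_u:u\equiv i\pmod t\}$, and for $u=0,\dots,t-1$ let $w_u=|\ell_0\cap O_u|$. *)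

theory Defs
  imports Complex_Main "HOL-Computational_Algebra.Primes"
begin

definition subfield_q :: "nat \<Rightarrow> 'a::field set" where
  "subfield_q q = {x. x ^ q = x}"

definition Fq_subspace :: "nat \<Rightarrow> 'a::field set \<Rightarrow> bool" where
  "Fq_subspace q W \<longleftrightarrow> 0 \<in> W \<and> (\<forall>x\<in>W. \<forall>y\<in>W. x + y \<in> W)
      \<and> (\<forall>c\<in>subfield_q q. \<forall>x\<in>W. c * x \<in> W)"

definition primitive_elem :: "'a::field \<Rightarrow> bool" where
  "primitive_elem \<alpha> \<longleftrightarrow> \<alpha> \<noteq> 0 \<and> (\<forall>x. x \<noteq> 0 \<longrightarrow> (\<exists>i::nat. x = \<alpha> ^ i))"

text \<open>Points of PG(2,q) are identified with indices i < q^2+q+1 (P_i spanned by alpha^i).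
  A line is the set of points contained in a 2-dimensional F_q-subspace W
  (i.e. an F_q-subspace with q^2 elements); P_u lies on it iff alpha^u \<in> W.\<close>
definition pg_line :: "nat \<Rightarrow> 'a::field \<Rightarrow> nat set \<Rightarrow> bool" where
  "pg_line q \<alpha> L \<longleftrightarrow> (\<exists>W. Fq_subspace q W \<and> card W = q ^ 2 \<and>
      L = {u. u < q^2 + q + 1 \<and> \<alpha> ^ u \<in> W})"

definition tau_map :: "nat \<Rightarrow> nat \<Rightarrow> nat \<Rightarrow> nat" where
  "tau_map p q u = (u * p) mod (q^2 + q + 1)"

definition orbit_class :: "nat \<Rightarrow> nat \<Rightarrow> nat \<Rightarrow> nat set" where
  "orbit_class q t i = {u. u < q^2 + q + 1 \<and> u mod t = i}"

definition wcount :: "nat \<Rightarrow> nat \<Rightarrow> nat set \<Rightarrow> nat \<Rightarrow> nat" where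
  "wcount q t L u = card (L \<inter> orbit_class q t u)"

end

theory Submission
  imports Defs "HOL-Number_Theory.Number_Theory"
begin

definition subsp :: "'a::field set \<Rightarrow> 'a set \<Rightarrow> bool" where
  "subsp K S \<longleftrightarrow> 0 \<in> S \<and> (\<forall>x\<in>S. \<forall>y\<in>S. x + y \<in> S) \<and> (\<forall>c\<in>K. \<forall>x\<in>S. c * x \<in> S)"

definition subf :: "'a::field set \<Rightarrow> bool" where
  "subf K \<longleftrightarrow> 0 \<in> K \<and> 1 \<in> K \<and> (\<forall>a\<in>K. \<forall>b\<in>K. a + b \<in> K \<and> a - b \<in> K \<and> a * b \<in> K)
     \<and> (\<forall>a\<in>K. inverse a \<in> K)"

lemma subsp_ext:
  fixes K T :: "'a::{field,finite} set"
  assumes K: "subf K" and T: "subsp K T" and y: "y \<notin> T"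
  defines "T' \<equiv> (\<lambda>(t,c). t + c * y) ` (T \<times> K)"
  shows "subsp K T'" "card T' = card T * card K" "T \<subseteq> T'" "y \<in> T'"
    "\<And>S. subsp K S \<Longrightarrow> T \<subseteq> S \<Longrightarrow> y \<in> S \<Longrightarrow> T' \<subseteq> S"
proof -
  have K0: "0 \<in> K" and K1: "1 \<in> K" and Kops: "\<And>a b. a\<in>K \<Longrightarrow> b\<in>K \<Longrightarrow> a + b \<in> K \<and> a - b \<in> K \<and> a * b \<in> K"
    and Kinv: "\<And>a. a \<in> K \<Longrightarrow> inverse a \<in> K" using K unfolding subf_def by auto
  have T0: "0 \<in> T" and Tadd: "\<And>x z. x\<in>T \<Longrightarrow> z\<in>T \<Longrightarrow> x + z \<in> T"
    and Tsc: "\<And>c x. c\<in>K \<Longrightarrow> x\<in>T \<Longrightarrow> c * x \<in> T" using T unfolding subsp_def by auto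
  have Km1: "-1 \<in> K" using Kops[OF K0 K1] by simp
  have Tdiff: "x - z \<in> T" if "x \<in> T" "z \<in> T" for x z
    using Tadd[OF that(1) Tsc[OF Km1 that(2)]] by simp
  show "subsp K T'" unfolding subsp_def T'_def
  proof (intro conjI ballI)
    show "0 \<in> (\<lambda>(t, c). t + c * y) ` (T \<times> K)"
      by (rule image_eqI[of _ _ "(0,0)"]) (use T0 K0 in auto)
  next
    fix x z assume "x \<in> (\<lambda>(t, c). t + c * y) ` (T \<times> K)" "z \<in> (\<lambda>(t, c). t + c * y) ` (T \<times> K)"
    then obtain t1 c1 t2 c2 where "t1\<in>T" "c1\<in>K" "t2\<in>T" "c2\<in>K" "x = t1 + c1*y" "z = t2 + c2*y" by auto
    then show "x + z \<in> (\<lambda>(t, c). t + c * y) ` (T \<times> K)"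
      by (intro image_eqI[of _ _ "(t1+t2, c1+c2)"]) (auto simp: algebra_simps Tadd Kops)
  next
    fix c x assume "c \<in> K" "x \<in> (\<lambda>(t, c). t + c * y) ` (T \<times> K)"
    then obtain t1 c1 where "t1\<in>T" "c1\<in>K" "x = t1 + c1*y" by auto
    then show "c * x \<in> (\<lambda>(t, c). t + c * y) ` (T \<times> K)" using \<open>c \<in> K\<close>
      by (intro image_eqI[of _ _ "(c*t1, c*c1)"]) (auto simp: algebra_simps Tsc Kops)
  qed
  have inj: "inj_on (\<lambda>(t,c). t + c * y) (T \<times> K)"
  proof (rule inj_onI, clarsimp)
    fix t1 c1 t2 c2 assume h: "t1\<in>T" "c1\<in>K" "t2\<in>T" "c2\<in>K" "t1 + c1*y = t2 + c2*y"
    show "t1 = t2 \<and> c1 = c2"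
    proof (cases "c1 = c2")
      case True then show ?thesis using h by simp
    next
      case False
      have "(c1 - c2) * y = t2 - t1" using h(5) by (simp add: algebra_simps)
      hence "y = inverse (c1 - c2) * (t2 - t1)" using False by (simp add: field_simps)
      moreover have "inverse (c1 - c2) \<in> K" using Kinv Kops h by blast
      ultimately have "y \<in> T" using Tsc Tdiff h by simp
      then show ?thesis using y by simp
    qed
  qed
  show "card T' = card T * card K" unfolding T'_def
    by (simp add: card_image[OF inj] card_cartesian_product)
  show "T \<subseteq> T'" unfolding T'_def
  proof
    fix x assume "x \<in> T" then show "x \<in> (\<lambda>(t, c). t + c * y) ` (T \<times> K)"
      by (intro image_eqI[of _ _ "(x,0)"]) (use K0 in auto)
  qed
  show "y \<in> T'" unfolding T'_def
    by (intro image_eqI[of _ _ "(0,1)"]) (use K1 T0 in auto)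
  fix S assume S: "subsp K S" "T \<subseteq> S" "y \<in> S"
  show "T' \<subseteq> S"
  proof
    fix x assume "x \<in> T'"
    then obtain t c where tc: "t \<in> T" "c \<in> K" "x = t + c * y" unfolding T'_def by auto
    have "t \<in> S" using tc S by blast
    moreover have "c * y \<in> S" using S(1,3) tc(2) unfolding subsp_def by blast
    ultimately show "x \<in> S" using S(1) tc(3) unfolding subsp_def by blast
  qed
qed

lemma subsp_power:
  fixes K S :: "'a::{field,finite} set"
  assumes K: "subf K" and S: "subsp K S"
  shows "\<exists>j. card S = card K ^ j"
proof -
  have main: "\<And>T. subsp K T \<Longrightarrow> T \<subseteq> S \<Longrightarrow> card S - card T = n \<Longrightarrow> (\<exists>j. card T = card K ^ j)
     \<Longrightarrow> \<exists>j. card S = card K ^ j" for n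
  proof (induction n rule: less_induct)
    case (less n T)
    show ?case
    proof (cases "T = S")
      case True then show ?thesis using less by simp
    next
      case False
      then obtain y where y: "y \<in> S" "y \<notin> T" using less.prems(2) by blast
      define T' where "T' = (\<lambda>(t,c). t + c * y) ` (T \<times> K)"
      note e = subsp_ext[OF K less.prems(1) y(2), folded T'_def]
      have sub: "T' \<subseteq> S" using e(5)[OF S less.prems(2) y(1)] .
      have "T \<subset> T'" using e(3,4) y(2) by blast
      hence "card T < card T'" by (simp add: psubset_card_mono)
      moreover have "card T' \<le> card S" using sub by (simp add: card_mono)
      ultimately have lt: "card S - card T' < n" using less.prems(3) by linarith
      obtain j where "card T = card K ^ j" using less.prems(4) by blast
      hence "card T' = card K ^ Suc j" using e(2) by simp
      then show ?thesis using less.IH[OF lt e(1) sub refl] by blast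
    qed
  qed
  have "subsp K {0}" unfolding subsp_def by simp
  moreover have "{0} \<subseteq> S" using S unfolding subsp_def by simp
  moreover have "card ({0::'a}) = card K ^ 0" by simp
  ultimately show ?thesis using main[of "{0}"] by blast
qed



lemma card_mult_dvd: "0 < a \<Longrightarrow> card {i::nat. i < a * b \<and> a dvd i} = b"
proof -
  assume a: "0 < a"
  have "{i::nat. i < a * b \<and> a dvd i} = (\<lambda>j. a * j) ` {..<b}"
    using a by (auto elim!: dvdE)
  moreover have "inj_on (\<lambda>j. a * j) {..<b}" using a by (auto simp: inj_on_def)
  ultimately show ?thesis by (simp add: card_image)
qed

locale PG =
  fixes \<alpha> :: "'a::{field,finite}" and p h s q :: nat
  assumes pr: "prime p" and h1: "h \<ge> 1" and qp: "q = p^h" and cardU: "card (UNIV::'a set) = q^3"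
    and prim: "primitive_elem \<alpha>" and qs: "q = s^2"
begin

definition n3 where "n3 = q^3 - 1"
definition NN where "NN = q^2 + q + 1"
definition lg where "lg x = (SOME i. i < n3 \<and> \<alpha>^i = x)"
definition ind where "ind x = lg x mod NN"
definition FF :: "nat \<Rightarrow> 'a set" where "FF d = {x. x^d = x}"

lemma p2: "p \<ge> 2" using pr prime_ge_2_nat by blast
lemma q2: "q \<ge> 2"
proof -
  have "p ^ 1 \<le> p ^ h" using h1 p2 by (intro power_increasing) auto
  thus ?thesis using p2 qp by simp
qed
lemma s2: "s \<ge> 2"
proof (rule ccontr)
  assume "\<not> 2 \<le> s" hence "s \<le> 1" by simp
  hence "s = 0 \<or> s = 1" by auto
  thus False using q2 qs by auto
qed

lemma n3_pos: "n3 > 0"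
proof -
  have "q^3 \<ge> 2^3" using q2 by (intro power_mono) auto
  thus ?thesis unfolding n3_def by simp
qed

lemma cardU': "card (UNIV::'a set) = Suc n3"
  using cardU n3_pos unfolding n3_def by simp

lemma alpha_ne0: "\<alpha> \<noteq> 0" using prim unfolding primitive_elem_def by simp

lemma pow_n3: "x \<noteq> (0::'a) \<Longrightarrow> x ^ n3 = 1"
proof -
  assume x: "x \<noteq> 0"
  let ?U = "UNIV - {0::'a}"
  have cU: "card ?U = n3" using cardU' by (simp add: card_Diff_singleton)
  have "(\<Prod>y\<in>?U. x * y) = x ^ card ?U * (\<Prod>y\<in>?U. y)"
    by (simp add: prod.distrib)
  moreover have "(\<Prod>y\<in>?U. x * y) = (\<Prod>y\<in>?U. y)"
    by (rule prod.reindex_bij_witness[of _ "\<lambda>y. y / x" "\<lambda>y. x * y"]) (use x in auto)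
  moreover have "(\<Prod>y\<in>?U. y) \<noteq> 0" by simp
  ultimately show ?thesis using cU by simp
qed

lemma alpha_pow_mod: "\<alpha> ^ i = \<alpha> ^ (i mod n3)"
proof -
  have "\<alpha> ^ i = \<alpha> ^ (n3 * (i div n3) + i mod n3)" by simp
  also have "\<dots> = (\<alpha> ^ n3) ^ (i div n3) * \<alpha> ^ (i mod n3)" by (metis power_add power_mult)
  finally show ?thesis using pow_n3 alpha_ne0 by simp
qed

lemma surj_alpha: "x \<noteq> 0 \<Longrightarrow> \<exists>i<n3. \<alpha>^i = x"
proof -
  assume "x \<noteq> 0"
  then obtain i where "x = \<alpha>^i" using prim unfolding primitive_elem_def by blast
  thus ?thesis using alpha_pow_mod n3_pos by (intro exI[of _ "i mod n3"]) auto
qed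

lemma inj_alpha: "inj_on (\<lambda>i. \<alpha>^i) {..<n3}"
proof -
  have "(\<lambda>i. \<alpha>^i) ` {..<n3} = UNIV - {0}"
    using surj_alpha alpha_ne0 by fastforce
  hence "card ((\<lambda>i. \<alpha>^i) ` {..<n3}) = card {..<n3}"
    using cardU' by (simp add: card_Diff_singleton)
  thus ?thesis by (intro eq_card_imp_inj_on) auto
qed

lemma alpha_eq: "\<alpha> ^ i = \<alpha> ^ j \<longleftrightarrow> i mod n3 = j mod n3"
proof
  assume "\<alpha> ^ i = \<alpha> ^ j"
  hence "\<alpha> ^ (i mod n3) = \<alpha> ^ (j mod n3)" using alpha_pow_mod by metis
  thus "i mod n3 = j mod n3" using inj_alpha n3_pos by (auto simp: inj_on_def)
next
  assume "i mod n3 = j mod n3" thus "\<alpha> ^ i = \<alpha> ^ j" using alpha_pow_mod by metis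
qed

lemma alpha_one: "\<alpha> ^ i = 1 \<longleftrightarrow> n3 dvd i"
  using alpha_eq[of i 0] by (simp add: mod_eq_0_iff_dvd)

lemma lg: "x \<noteq> 0 \<Longrightarrow> lg x < n3 \<and> \<alpha> ^ lg x = x"
  unfolding lg_def by (rule someI_ex) (rule surj_alpha)

lemma lg_pow: "lg (\<alpha> ^ i) = i mod n3"
proof -
  have "\<alpha>^i \<noteq> 0" using alpha_ne0 by simp
  hence "lg (\<alpha>^i) < n3" "\<alpha> ^ lg (\<alpha>^i) = \<alpha>^i" using lg by auto
  thus ?thesis using alpha_eq by (metis mod_less)
qed

lemma CHAR_p: "CHAR('a) = p"
proof -
  have pos: "CHAR('a) > 0" by (rule finite_imp_CHAR_pos) simp
  have pc: "prime CHAR('a)" using prime_CHAR_semidom[OF pos] .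
  have "CHAR('a) dvd p ^ (h*3)" using CHAR_dvd_CARD[where 'a='a] cardU qp by (simp add: power_mult)
  hence "CHAR('a) dvd p" using pc prime_dvd_power by blast
  thus ?thesis using pc pr by (simp add: primes_dvd_imp_eq)
qed

lemma s_pow: "\<exists>j. s = p ^ j"
proof -
  have "s dvd p ^ h" using qs qp by (metis dvd_triv_left power2_eq_square)
  thus ?thesis using divides_primepow_nat[OF pr] by blast
qed

lemma frob_add: "d = p ^ k \<Longrightarrow> (x + y :: 'a) ^ d = x ^ d + y ^ d"
  using freshmans_dream'[where 'a='a and m=d and n=k] CHAR_p pr by simp

lemma frob_diff: "d = p ^ k \<Longrightarrow> (x - y :: 'a) ^ d = x ^ d - y ^ d"
proof -
  assume d: "d = p ^ k"
  have "x ^ d = ((x - y) + y) ^ d" by simp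
  also have "\<dots> = (x - y)^d + y^d" using frob_add[OF d] by blast
  finally show ?thesis by simp
qed

lemma FF_subf: "d = p ^ k \<Longrightarrow> subf (FF d)"
proof -
  assume d: "d = p ^ k"
  have dpos: "d > 0" using d p2 by simp
  show ?thesis unfolding subf_def FF_def
    using dpos frob_add[OF d] frob_diff[OF d]
    by (auto simp: power_mult_distrib power_inverse)
qed

lemma FF_mem: "d \<ge> 1 \<Longrightarrow> \<alpha> ^ i \<in> FF d \<longleftrightarrow> n3 dvd i * (d - 1)"
proof -
  assume d: "d \<ge> 1"
  have "\<alpha> ^ i \<in> FF d \<longleftrightarrow> \<alpha> ^ (i * d) = \<alpha> ^ i" unfolding FF_def by (simp add: power_mult)
  also have "\<dots> \<longleftrightarrow> (i*d) mod n3 = i mod n3" by (rule alpha_eq)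
  also have "\<dots> \<longleftrightarrow> n3 dvd i * d - i" using d by (intro mod_eq_dvd_iff_nat) simp
  also have "i * d - i = i * (d - 1)" by (simp add: diff_mult_distrib2)
  finally show ?thesis .
qed

lemma FF_card: "d \<ge> 2 \<Longrightarrow> (d - 1) dvd n3 \<Longrightarrow> card (FF d) = d"
proof -
  assume d: "d \<ge> 2" and dv: "(d - 1) dvd n3"
  obtain g where g: "n3 = g * (d - 1)" using dv by (metis dvd_def mult.commute)
  have gpos: "g > 0" using g n3_pos by (cases g) auto
  have "FF d = insert 0 ((\<lambda>i. \<alpha>^i) ` {i. i < n3 \<and> n3 dvd i * (d - 1)})"
  proof -
    { fix x have "x \<in> FF d \<longleftrightarrow> x \<in> insert 0 ((\<lambda>i. \<alpha>^i) ` {i. i < n3 \<and> n3 dvd i * (d - 1)})"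
    proof (cases "x = 0")
      case True then show ?thesis using d unfolding FF_def by simp
    next
      case False
      then obtain i where i: "i < n3" "\<alpha>^i = x" using surj_alpha by blast
      show ?thesis
      proof
        assume "x \<in> FF d" thus "x \<in> insert 0 ((\<lambda>i. \<alpha>^i) ` {i. i < n3 \<and> n3 dvd i * (d - 1)})"
          using FF_mem[of d i] d i by auto
      next
        assume "x \<in> insert 0 ((\<lambda>i. \<alpha>^i) ` {i. i < n3 \<and> n3 dvd i * (d - 1)})"
        then show "x \<in> FF d" using False FF_mem[of d] d by auto
      qed
    qed }
    thus ?thesis by blast
  qed
  moreover have "{i. i < n3 \<and> n3 dvd i * (d - 1)} = {i. i < g * (d - 1) \<and> g dvd i}"
    using d g by auto
  moreover have "card {i. i < g * (d - 1) \<and> g dvd i} = d - 1" using card_mult_dvd gpos by blast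
  moreover have "inj_on (\<lambda>i. \<alpha>^i) {i. i < n3 \<and> n3 dvd i * (d - 1)}"
    using inj_alpha by (rule inj_on_subset) auto
  moreover have "0 \<notin> (\<lambda>i. \<alpha>^i) ` {i. i < n3 \<and> n3 dvd i * (d - 1)}" using alpha_ne0 by auto
  ultimately show ?thesis using d by (simp add: card_image)
qed

end


lemma ar1: "(q::nat) = (y+1)^2 \<Longrightarrow> q^2+q+1 = (y*y+y+1) * ((y+1)^2 + (y+1) + 1)"
  by (simp add: power2_eq_square algebra_simps)
lemma ar2: "(q::nat) = (y+1)^2 \<Longrightarrow> q^3 - 1 = (q^2+q+1) * (q - 1)"
  apply (cases q) apply simp by (simp add: power2_eq_square power3_eq_cube algebra_simps)
lemma ar3: "(q::nat) = (y+1)^2 \<Longrightarrow> q^3 - 1 = ((y+1)^3+1) * ((y+1)^3 - 1)"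
  by (simp add: power2_eq_square power3_eq_cube algebra_simps power_mult)
lemma ar4: "((y+1::nat)^3+1) = ((y+1)+1) * (y*y+y+1)"
  by (simp add: power2_eq_square power3_eq_cube algebra_simps)
lemma ar5: "((y+1::nat)^3-1) = y * ((y+1)^2+(y+1)+1)"
  by (simp add: power2_eq_square power3_eq_cube algebra_simps)
lemma ar6: "(y+1::nat)^2 - (y+1) + 1 = y*y+y+1"
  by (simp add: power2_eq_square power3_eq_cube algebra_simps)
lemma ar7: "(y+1::nat)^2 - 1 = y * ((y+1) + 1)"
  by (simp add: power2_eq_square algebra_simps)

context PG begin

definition r where "r = s - 1"
definition m where "m = r*r + r + 1"
definition MM where "MM = s^2 + s + 1"

lemma s_r: "s = r + 1" using s2 unfolding r_def by simp
lemma r_pos: "r \<ge> 1" using s2 unfolding r_def by simp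

lemma q_r: "q = (r+1)^2" by (simp only: s_r[symmetric] qs)

lemma NN_mM: "NN = m * MM"
  using ar1[OF q_r] unfolding NN_def m_def MM_def by (simp only: s_r[symmetric])
lemma n3_NN: "n3 = NN * (q - 1)"
  using ar2[OF q_r] unfolding NN_def n3_def .
lemma n3_s3: "n3 = (s^3+1) * (s^3-1)"
  using ar3[OF q_r] unfolding n3_def by (simp only: s_r[symmetric])
lemma s3m: "s^3 + 1 = (s+1) * m"
  using ar4[of r] unfolding m_def by (simp only: s_r[symmetric])
lemma s3r: "s^3 - 1 = r * MM"
  using ar5[of r] unfolding MM_def by (simp only: s_r[symmetric])
lemma m_eq: "m = s^2 - s + 1"
  using ar6[of r] unfolding m_def by (simp only: s_r[symmetric])
lemma q1: "q - 1 = r * (s + 1)"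
  using ar7[of r] q_r by (simp only: s_r[symmetric])

lemma NN_pos: "NN > 0" unfolding NN_def by simp
lemma m_pos: "m > 0" unfolding m_def by simp
lemma NN_dvd_n3: "NN dvd n3" using n3_NN by simp
lemma m_dvd_NN: "m dvd NN" using NN_mM by simp
lemma NN_le_n3: "NN \<le> n3" using n3_NN n3_pos by (simp add: dvd_imp_le NN_dvd_n3)

definition jj where "jj = (SOME j. s = p ^ j)"
lemma s_jj: "s = p ^ jj" unfolding jj_def using s_pow by (rule someI_ex)

abbreviation Fq where "Fq \<equiv> FF q"
abbreviation Fs where "Fs \<equiv> FF s"
abbreviation EE where "EE \<equiv> FF (s^3)"

lemma subf_Fq: "subf Fq" using FF_subf qp by blast
lemma subf_Fs: "subf Fs" using FF_subf s_jj by blast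
lemma subf_E: "subf EE" using FF_subf[of "s^3" "jj*3"] s_jj by (simp add: power_mult)

lemma FF_pow: "x \<in> FF d \<Longrightarrow> x ^ k \<in> FF d"
proof -
  assume "x \<in> FF d"
  hence x: "x ^ d = x" unfolding FF_def by simp
  have "(x ^ k) ^ d = (x ^ d) ^ k" by (metis power_mult mult.commute)
  thus ?thesis using x unfolding FF_def by simp
qed

lemma FF_iter: "x \<in> FF d \<Longrightarrow> x \<in> FF (d ^ k)"
proof (induction k)
  case 0 then show ?case unfolding FF_def by simp
next
  case (Suc k)
  have "x ^ (d ^ Suc k) = (x ^ (d ^ k)) ^ d" by (metis power_Suc power_mult mult.commute)
  thus ?case using Suc unfolding FF_def by simp
qed

lemma Fs_Fq: "Fs \<subseteq> Fq" using FF_iter[of _ s 2] qs by auto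
lemma Fs_E: "Fs \<subseteq> EE" using FF_iter[of _ s 3] by auto
lemma Fq_E: "x \<in> Fq \<Longrightarrow> x \<in> EE \<Longrightarrow> x \<in> Fs"
proof -
  assume a: "x \<in> Fq" "x \<in> EE"
  have "x ^ (s^3) = (x ^ (s^2)) ^ s" by (simp add: power_mult[symmetric] power2_eq_square power3_eq_cube mult.commute)
  thus ?thesis using a qs unfolding FF_def by simp
qed

lemma s3dvd: "(s^3 - 1) dvd n3" unfolding n3_s3 by (rule dvd_triv_right)
lemma card_Fq: "card Fq = q"
proof -
  have "(q-1) dvd n3" unfolding n3_NN by (rule dvd_triv_right)
  thus ?thesis using FF_card[OF q2] by blast
qed
lemma card_Fs: "card Fs = s"
proof -
  have "(s-1) dvd (s^3-1)" unfolding s3r r_def by (rule dvd_triv_left)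
  hence "(s-1) dvd n3" using s3dvd by (rule dvd_trans)
  thus ?thesis using FF_card[OF s2] by blast
qed
lemma card_E: "card EE = s^3"
proof -
  have "s^3 \<ge> 2^3" using s2 by (intro power_mono) auto
  hence "s^3 \<ge> 2" by simp
  thus ?thesis using FF_card s3dvd by blast
qed

lemma alphaN_Fq: "\<alpha> ^ NN \<in> Fq"
  using FF_mem[of q NN] q2 n3_NN by simp

lemma Fq_char: "c \<in> Fq \<Longrightarrow> c \<noteq> 0 \<Longrightarrow> \<exists>k. c = \<alpha> ^ (NN * k)"
proof -
  assume c: "c \<in> Fq" "c \<noteq> 0"
  obtain i where i: "\<alpha>^i = c" using surj_alpha c by blast
  have "NN * (q - 1) dvd i * (q - 1)" using FF_mem[of q i] q2 c i n3_NN by simp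
  hence "NN dvd i" using q2 by simp
  thus ?thesis using i by (auto elim!: dvdE)
qed

lemma E_char: "\<alpha> ^ k \<in> EE \<longleftrightarrow> (s^3 + 1) dvd k"
proof -
  have "s^3 \<ge> 2^3" using s2 by (intro power_mono) auto
  hence s3: "s^3 \<ge> 2" by simp
  have "\<alpha> ^ k \<in> EE \<longleftrightarrow> n3 dvd k * (s^3 - 1)" using FF_mem[of "s^3" k] s3 by simp
  also have "\<dots> \<longleftrightarrow> (s^3+1) * (s^3-1) dvd k * (s^3 - 1)" by (simp only: n3_s3)
  also have "\<dots> \<longleftrightarrow> (s^3 + 1) dvd k" by (rule dvd_times_right_cancel_iff) (use s3 in simp)
  finally show ?thesis .
qed

lemma lg_mod: "x \<noteq> 0 \<Longrightarrow> ind x < NN \<and> x = \<alpha> ^ lg x \<and> lg x < n3"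
  unfolding ind_def using lg NN_pos by auto

lemma ind_pow: "ind (\<alpha> ^ i) = i mod NN"
  unfolding ind_def lg_pow using NN_dvd_n3 by (simp add: mod_mod_cancel)

lemma ind_pow_lt: "u < NN \<Longrightarrow> ind (\<alpha> ^ u) = u"
  using ind_pow by simp

lemma ind_eq: "x \<noteq> 0 \<Longrightarrow> y \<noteq> 0 \<Longrightarrow> ind x = ind y \<longleftrightarrow> (\<exists>c\<in>Fq. c \<noteq> 0 \<and> y = c * x)"
proof -
  assume x: "x \<noteq> 0" and y: "y \<noteq> 0"
  define a where "a = lg x"
  define b where "b = lg y"
  have xa: "x = \<alpha>^a" and yb: "y = \<alpha>^b" using lg x y unfolding a_def b_def by auto
  have ia: "ind x = a mod NN" and ib: "ind y = b mod NN" unfolding ind_def a_def b_def by simp_all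
  have aN: "(\<alpha>^NN)^k \<in> Fq" for k using FF_pow alphaN_Fq by blast
  have aN0: "(\<alpha>^NN)^k \<noteq> 0" for k using alpha_ne0 by simp
  show ?thesis
  proof
    assume "ind x = ind y"
    hence e: "a mod NN = b mod NN" using ia ib by simp
    show "\<exists>c\<in>Fq. c \<noteq> 0 \<and> y = c * x"
    proof (cases "a \<le> b")
      case True
      then obtain k where "b - a = NN * k" using e mod_eq_dvd_iff_nat[of a b NN] by (auto elim!: dvdE)
      hence "b = NN * k + a" using True by simp
      hence "y = (\<alpha>^NN)^k * x" using xa yb by (simp add: power_add power_mult)
      thus ?thesis using aN aN0 by blast
    next
      case False
      then obtain k where "a - b = NN * k" using e mod_eq_dvd_iff_nat[of b a NN] by (auto elim!: dvdE)
      hence "a = NN * k + b" using False by simp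
      hence "x = (\<alpha>^NN)^k * y" using xa yb by (simp add: power_add power_mult)
      hence "y = inverse ((\<alpha>^NN)^k) * x" using aN0[of k] by (simp add: field_simps)
      moreover have "inverse ((\<alpha>^NN)^k) \<in> Fq" using subf_Fq aN unfolding subf_def by blast
      ultimately show ?thesis using aN0 by (metis inverse_nonzero_iff_nonzero)
    qed
  next
    assume "\<exists>c\<in>Fq. c \<noteq> 0 \<and> y = c * x"
    then obtain c where c: "c \<in> Fq" "c \<noteq> 0" "y = c * x" by blast
    obtain k where "c = \<alpha>^(NN*k)" using Fq_char c by blast
    hence "y = \<alpha>^(NN*k + a)" using c xa by (simp add: power_add)
    hence "ind y = (NN*k+a) mod NN" using ind_pow by simp
    thus "ind x = ind y" using ia by simp
  qed
qed

end


lemma card_fibers: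
  assumes "finite A" "f ` A = B" "\<And>b. b \<in> B \<Longrightarrow> card {x\<in>A. f x = b} = k"
  shows "card A = k * card B"
proof -
  have "A = (\<Union>b\<in>B. {x\<in>A. f x = b})" using assms(2) by auto
  moreover have "card (\<Union>b\<in>B. {x\<in>A. f x = b}) = (\<Sum>b\<in>B. card {x\<in>A. f x = b})"
    by (rule card_UN_disjoint) (use assms(1,2) in auto)
  ultimately have "card A = (\<Sum>b\<in>B. card {x\<in>A. f x = b})" by simp
  also have "\<dots> = (\<Sum>b\<in>B. k)" using assms(3) by simp
  finally show ?thesis by simp
qed

locale PGL = PG +
  fixes W :: "'a set" and L :: "nat set"
  assumes Wsub: "Fq_subspace q W" and cardW: "card W = q^2"
    and L_def: "L = {u. u < q^2+q+1 \<and> \<alpha>^u \<in> W}"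
    and tauL: "tau_map p q ` L = L"
begin

lemma W0: "0 \<in> W" using Wsub unfolding Fq_subspace_def by simp
lemma Wadd: "x \<in> W \<Longrightarrow> y \<in> W \<Longrightarrow> x + y \<in> W" using Wsub unfolding Fq_subspace_def by simp
lemma Wsc: "c \<in> Fq \<Longrightarrow> x \<in> W \<Longrightarrow> c * x \<in> W"
  using Wsub unfolding Fq_subspace_def subfield_q_def FF_def by simp

lemma L_NN: "L = {u. u < NN \<and> \<alpha>^u \<in> W}" using L_def unfolding NN_def .

lemma W_ind: "x \<noteq> 0 \<Longrightarrow> x \<in> W \<longleftrightarrow> ind x \<in> L"
proof -
  assume x: "x \<noteq> 0"
  have lt: "ind x < NN" using lg_mod x by blast
  have a0: "\<alpha> ^ ind x \<noteq> 0" using alpha_ne0 by simp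
  have "ind x = ind (\<alpha> ^ ind x)" using ind_pow_lt lt by simp
  then obtain c where c: "c \<in> Fq" "c \<noteq> 0" "\<alpha> ^ ind x = c * x" using ind_eq[OF x a0] by blast
  have ic: "inverse c \<in> Fq" using c subf_Fq unfolding subf_def by blast
  have xe: "x = inverse c * \<alpha> ^ ind x" using c by simp
  show ?thesis
  proof
    assume "x \<in> W" hence "\<alpha> ^ ind x \<in> W" using c Wsc by simp
    thus "ind x \<in> L" using lt L_NN by simp
  next
    assume "ind x \<in> L" hence "\<alpha> ^ ind x \<in> W" using L_NN by simp
    thus "x \<in> W" using xe Wsc ic by metis
  qed
qed

lemma card_L: "card L = q + 1"
proof -
  let ?A = "W - {0}"
  have img: "ind ` ?A = L"
  proof
    show "ind ` ?A \<subseteq> L" using W_ind by auto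
  next
    show "L \<subseteq> ind ` ?A"
    proof
      fix u assume u: "u \<in> L"
      hence "u < NN" "\<alpha>^u \<in> W" using L_NN by auto
      thus "u \<in> ind ` ?A" using ind_pow_lt alpha_ne0 by (intro image_eqI[of _ _ "\<alpha>^u"]) auto
    qed
  qed
  have fib: "card {x\<in>?A. ind x = u} = q - 1" if u: "u \<in> L" for u
  proof -
    have u': "u < NN" "\<alpha>^u \<in> W" using u L_NN by auto
    have a0: "\<alpha>^u \<noteq> 0" using alpha_ne0 by simp
    have "{x\<in>?A. ind x = u} = (\<lambda>c. c * \<alpha>^u) ` (Fq - {0})"
    proof
      show "{x\<in>?A. ind x = u} \<subseteq> (\<lambda>c. c * \<alpha>^u) ` (Fq - {0})"
      proof
        fix x assume "x \<in> {x\<in>?A. ind x = u}"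
        hence x: "x \<noteq> 0" "ind (\<alpha>^u) = ind x" using ind_pow_lt u' by auto
        then obtain c where "c \<in> Fq" "c \<noteq> 0" "x = c * \<alpha>^u" using ind_eq[OF a0 x(1)] by blast
        thus "x \<in> (\<lambda>c. c * \<alpha>^u) ` (Fq - {0})" by blast
      qed
    next
      show "(\<lambda>c. c * \<alpha>^u) ` (Fq - {0}) \<subseteq> {x\<in>?A. ind x = u}"
      proof
        fix x assume "x \<in> (\<lambda>c. c * \<alpha>^u) ` (Fq - {0})"
        then obtain c where c: "c \<in> Fq" "c \<noteq> 0" "x = c * \<alpha>^u" by blast
        have "x \<in> W" using c Wsc u' by simp
        moreover have "x \<noteq> 0" using c a0 by simp
        moreover have "ind (\<alpha>^u) = ind x" using ind_eq[OF a0 \<open>x \<noteq> 0\<close>] c by blast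
        ultimately show "x \<in> {x\<in>?A. ind x = u}" using ind_pow_lt u' by simp
      qed
    qed
    moreover have "inj_on (\<lambda>c. c * \<alpha>^u) (Fq - {0})" using a0 by (auto simp: inj_on_def)
    moreover have "card (Fq - {0}) = q - 1"
      using card_Fq subf_Fq unfolding subf_def by (simp add: card_Diff_singleton)
    ultimately show ?thesis by (simp add: card_image)
  qed
  have "card ?A = (q - 1) * card L" using card_fibers[OF _ img fib] by simp
  moreover have "card ?A = q^2 - 1" using cardW W0 by (simp add: card_Diff_singleton)
  moreover have "q^2 - 1 = (q - 1) * (q + 1)" by (simp add: power2_eq_square algebra_simps)
  ultimately have "(q - 1) * card L = (q - 1) * (q + 1)" by simp
  moreover have "q - 1 \<noteq> 0" using q2 by simp
  ultimately show ?thesis using mult_left_cancel[of "q-1" "card L" "q+1"] by blast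
qed

end


context PGL begin

definition V :: "nat \<Rightarrow> 'a set" where "V i = (\<lambda>e. \<alpha>^i * e) ` EE"
definition B :: "nat \<Rightarrow> nat set" where "B i = {u. u < NN \<and> u mod m = i}"

lemma Fs_sub_Fq: "c \<in> Fs \<Longrightarrow> c \<in> Fq" using Fs_Fq by blast

lemma subsp_W: "subsp Fs W"
  unfolding subsp_def using W0 Wadd Wsc Fs_sub_Fq by blast

lemma subsp_V: "subsp Fs (V i)"
  unfolding subsp_def V_def
proof (intro conjI ballI)
  have E0: "0 \<in> EE" using subf_E unfolding subf_def by blast
  show "0 \<in> (\<lambda>e. \<alpha>^i * e) ` EE" by (rule image_eqI[of _ _ 0]) (use E0 in auto)
next
  fix x y assume "x \<in> (\<lambda>e. \<alpha>^i * e) ` EE" "y \<in> (\<lambda>e. \<alpha>^i * e) ` EE"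
  then obtain e1 e2 where "e1 \<in> EE" "e2 \<in> EE" "x = \<alpha>^i * e1" "y = \<alpha>^i * e2" by blast
  moreover have "e1 + e2 \<in> EE" using calculation subf_E unfolding subf_def by blast
  ultimately show "x + y \<in> (\<lambda>e. \<alpha>^i * e) ` EE"
    by (intro image_eqI[of _ _ "e1+e2"]) (auto simp: algebra_simps)
next
  fix c x assume "c \<in> Fs" "x \<in> (\<lambda>e. \<alpha>^i * e) ` EE"
  then obtain e1 where "e1 \<in> EE" "x = \<alpha>^i * e1" by blast
  moreover have "c * e1 \<in> EE" using calculation \<open>c \<in> Fs\<close> Fs_E subf_E unfolding subf_def by blast
  ultimately show "c * x \<in> (\<lambda>e. \<alpha>^i * e) ` EE"
    by (intro image_eqI[of _ _ "c*e1"]) (auto simp: algebra_simps)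
qed

lemma subsp_WV: "subsp Fs (W \<inter> V i)"
  using subsp_W subsp_V[of i] unfolding subsp_def by blast

lemma card_V: "card (V i) = s^3"
proof -
  have "inj_on (\<lambda>e. \<alpha>^i * e) EE" using alpha_ne0 by (auto simp: inj_on_def)
  thus ?thesis unfolding V_def using card_E by (simp add: card_image)
qed

lemma V_ind: "x \<in> V i \<Longrightarrow> x \<noteq> 0 \<Longrightarrow> ind x mod m = i mod m"
proof -
  assume x: "x \<in> V i" "x \<noteq> 0"
  then obtain e where e: "e \<in> EE" "x = \<alpha>^i * e" unfolding V_def by blast
  hence "e \<noteq> 0" using x by auto
  then obtain k where k: "\<alpha>^k = e" using surj_alpha by blast
  hence "(s^3+1) dvd k" using E_char e by blast
  hence "m dvd k" using s3m by (metis dvd_mult_right)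
  have "x = \<alpha>^(i+k)" using e k by (simp add: power_add)
  hence "ind x = (i+k) mod NN" using ind_pow by simp
  hence "ind x mod m = (i+k) mod m" using m_dvd_NN by (simp add: mod_mod_cancel)
  also have "\<dots> = i mod m" using \<open>m dvd k\<close> by (auto elim!: dvdE)
  finally show ?thesis .
qed

lemma alpha_m: "\<exists>c0 e0. c0 \<in> Fq \<and> c0 \<noteq> 0 \<and> e0 \<in> EE \<and> e0 \<noteq> 0 \<and> \<alpha>^m = c0 * e0"
proof -
  have MMe: "MM = (s+1) * s + 1" unfolding MM_def by (simp add: power2_eq_square algebra_simps)
  have cop: "coprime MM (s+1)"
  proof (rule coprimeI)
    fix c assume c: "c dvd MM" "c dvd s + 1"
    have "c dvd (s+1) * s" using c(2) by (rule dvd_mult2)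
    moreover have "c dvd (s+1) * s + 1" using c(1) unfolding MMe .
    ultimately have "c dvd 1" using dvd_add_right_iff by blast
    thus "is_unit c" by simp
  qed
  have MM0: "MM \<noteq> 0" unfolding MM_def by simp
  obtain a b where ab: "MM * a = (s+1) * b + gcd MM (s+1)" using bezout_nat[OF MM0, of "s+1"] by blast
  have ab': "MM * a = (s+1) * b + 1" using ab cop by simp
  have "NN * a = m * (MM * a)" using NN_mM by simp
  also have "\<dots> = m * ((s+1) * b + 1)" by (simp only: ab')
  also have "\<dots> = (s+1) * m * b + m" by (simp add: algebra_simps)
  also have "\<dots> = (s^3+1) * b + m" by (simp only: s3m)
  finally have eq: "\<alpha>^(NN * a) = \<alpha>^((s^3+1) * b) * \<alpha>^m" by (simp add: power_add)
  define e1 where "e1 = \<alpha>^((s^3+1) * b)"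
  have e10: "e1 \<noteq> 0" unfolding e1_def using alpha_ne0 by simp
  have e1E: "e1 \<in> EE" unfolding e1_def by (rule E_char[THEN iffD2]) (rule dvd_triv_left)
  have "(\<alpha>^NN)^a \<in> Fq" by (rule FF_pow[OF alphaN_Fq])
  hence c0: "\<alpha>^(NN*a) \<in> Fq" by (simp only: power_mult)
  have c00: "\<alpha>^(NN*a) \<noteq> 0" using alpha_ne0 by simp
  have "\<alpha>^m = \<alpha>^(NN*a) * inverse e1"
    using eq e10 unfolding e1_def[symmetric] by (simp add: field_simps)
  moreover have "inverse e1 \<in> EE" "inverse e1 \<noteq> 0" using e1E e10 subf_E unfolding subf_def by auto
  ultimately show ?thesis using c0 c00 by blast
qed

lemma V_surj: "u < NN \<Longrightarrow> u mod m = i \<Longrightarrow> \<exists>x\<in>V i. x \<noteq> 0 \<and> ind x = u"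
proof -
  assume u: "u < NN" "u mod m = i"
  obtain c0 e0 where ce: "c0 \<in> Fq" "c0 \<noteq> 0" "e0 \<in> EE" "e0 \<noteq> 0" "\<alpha>^m = c0 * e0" using alpha_m by blast
  define k where "k = u div m"
  have "u = u mod m + m * (u div m)" by simp
  hence uk: "u = i + m * k" unfolding k_def using u(2) by simp
  define x where "x = \<alpha>^i * e0^k"
  have xV: "x \<in> V i" unfolding x_def V_def using FF_pow[OF ce(3)] by blast
  have x0: "x \<noteq> 0" unfolding x_def using alpha_ne0 ce by simp
  have "\<alpha>^u = c0^k * x" unfolding x_def uk by (simp add: power_add power_mult ce(5) power_mult_distrib)
  moreover have "c0^k \<in> Fq" "c0^k \<noteq> 0" using FF_pow ce by auto
  moreover have a0: "\<alpha>^u \<noteq> 0" using alpha_ne0 by simp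
  ultimately have "ind x = ind (\<alpha>^u)" using ind_eq[OF x0 a0] by blast
  thus ?thesis using xV x0 ind_pow_lt u by auto
qed

lemma V_fq: "x \<in> V i \<Longrightarrow> x \<noteq> 0 \<Longrightarrow> c \<in> Fq \<Longrightarrow> c * x \<in> V i \<Longrightarrow> c \<in> Fs"
proof -
  assume a: "x \<in> V i" "x \<noteq> 0" "c \<in> Fq" "c * x \<in> V i"
  obtain e where e: "e \<in> EE" "x = \<alpha>^i * e" using a unfolding V_def by blast
  obtain e' where e': "e' \<in> EE" "c * x = \<alpha>^i * e'" using a unfolding V_def by blast
  have "e \<noteq> 0" using a e by simp
  have "\<alpha>^i * (c * e) = \<alpha>^i * e'" using e e' by (simp add: algebra_simps)
  hence "c * e = e'" using alpha_ne0 by simp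
  hence "c = e' * inverse e" using \<open>e \<noteq> 0\<close> by (simp add: field_simps)
  moreover have "e' * inverse e \<in> EE" using e e' subf_E unfolding subf_def by blast
  ultimately show ?thesis using Fq_E a by blast
qed

end


context PGL begin

lemma count_i:
  assumes i: "i < m"
  shows "card ((W \<inter> V i) - {0}) = (s - 1) * card (L \<inter> B i)"
proof -
  let ?A = "(W \<inter> V i) - {0}"
  have img: "ind ` ?A = L \<inter> B i"
  proof
    show "ind ` ?A \<subseteq> L \<inter> B i"
    proof
      fix u assume "u \<in> ind ` ?A"
      then obtain x where x: "x \<in> W" "x \<in> V i" "x \<noteq> 0" "u = ind x" by blast
      have "u \<in> L" using W_ind x by blast
      moreover have "u < NN" using lg_mod x by blast
      moreover have "u mod m = i" using V_ind[OF x(2,3)] i x(4) by simp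
      ultimately show "u \<in> L \<inter> B i" unfolding B_def by simp
    qed
  next
    show "L \<inter> B i \<subseteq> ind ` ?A"
    proof
      fix u assume u: "u \<in> L \<inter> B i"
      hence "u < NN" "u mod m = i" unfolding B_def by auto
      then obtain x where x: "x \<in> V i" "x \<noteq> 0" "ind x = u" using V_surj by blast
      have "x \<in> W" using W_ind[OF x(2)] x(3) u by blast
      thus "u \<in> ind ` ?A" using x by blast
    qed
  qed
  have fib: "card {x\<in>?A. ind x = u} = s - 1" if u: "u \<in> L \<inter> B i" for u
  proof -
    obtain x0 where x0: "x0 \<in> ?A" "ind x0 = u" using u img by (metis imageE)
    have x00: "x0 \<noteq> 0" "x0 \<in> W" "x0 \<in> V i" using x0 by auto
    have "{x\<in>?A. ind x = u} = (\<lambda>c. c * x0) ` (Fs - {0})"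
    proof
      show "{x\<in>?A. ind x = u} \<subseteq> (\<lambda>c. c * x0) ` (Fs - {0})"
      proof
        fix x assume "x \<in> {x\<in>?A. ind x = u}"
        hence x: "x \<noteq> 0" "x \<in> V i" "ind x0 = ind x" using x0 by auto
        then obtain c where c: "c \<in> Fq" "c \<noteq> 0" "x = c * x0" using ind_eq[OF x00(1) x(1)] by blast
        have "c \<in> Fs" using V_fq[OF x00(3) x00(1) c(1)] c(3) x(2) by simp
        thus "x \<in> (\<lambda>c. c * x0) ` (Fs - {0})" using c by blast
      qed
    next
      show "(\<lambda>c. c * x0) ` (Fs - {0}) \<subseteq> {x\<in>?A. ind x = u}"
      proof
        fix x assume "x \<in> (\<lambda>c. c * x0) ` (Fs - {0})"
        then obtain c where c: "c \<in> Fs" "c \<noteq> 0" "x = c * x0" by blast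
        have "x \<in> W" using c Wsc Fs_sub_Fq x00 by simp
        moreover have "x \<in> V i" using c subsp_V[of i] x00 unfolding subsp_def by blast
        moreover have "x \<noteq> 0" using c x00 by simp
        moreover have "ind x0 = ind x" using ind_eq[OF x00(1) \<open>x \<noteq> 0\<close>] c Fs_sub_Fq by blast
        ultimately show "x \<in> {x\<in>?A. ind x = u}" using x0 by simp
      qed
    qed
    moreover have "inj_on (\<lambda>c. c * x0) (Fs - {0})" using x00 by (auto simp: inj_on_def)
    moreover have "card (Fs - {0}) = s - 1"
      using card_Fs subf_Fs unfolding subf_def by (simp add: card_Diff_singleton)
    ultimately show ?thesis by (simp add: card_image)
  qed
  show ?thesis using card_fibers[OF _ img fib] by simp
qed

lemma card_LB_le: "card (L \<inter> B i) \<le> q + 1"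
  using card_L by (metis card_mono finite_Int inf_le1 finite_subset subsetI L_NN finite_Collect_less_nat mem_Collect_eq)

lemma ci_vals:
  assumes i: "i < m"
  shows "card (L \<inter> B i) = 1 \<or> card (L \<inter> B i) = s + 1"
proof -
  obtain j where j: "card (W \<inter> V i) = s ^ j" using subsp_power[OF subf_Fs subsp_WV] card_Fs by metis
  have Z: "0 \<in> W \<inter> V i" using subsp_WV[of i] unfolding subsp_def by blast
  have cA: "card ((W \<inter> V i) - {0}) = s^j - 1" using j Z by (simp add: card_Diff_singleton)
  have eq: "(s - 1) * card (L \<inter> B i) = s^j - 1" using count_i[OF i] cA by simp
  have j1: "j \<ge> 1"
  proof (rule ccontr)
    assume "\<not> j \<ge> 1" hence "j = 0" by simp
    hence "card (W \<inter> V i) = 1" using j by simp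
    hence WV: "W \<inter> V i = {0}" using Z by (metis card_1_singletonE singletonD)
    have inj: "inj_on (\<lambda>(w,v). w + v) (W \<times> V i)"
    proof (rule inj_onI, clarsimp)
      fix w v w' v' assume h: "w \<in> W" "v \<in> V i" "w' \<in> W" "v' \<in> V i" "w + v = w' + v'"
      have "w + (-1) * w' \<in> W" using h Wadd Wsc subf_Fq unfolding subf_def
        by (metis (no_types) diff_0 subf_Fq subf_def one_neq_zero W0)
      moreover have "v' + (-1) * v \<in> V i" using h subsp_V[of i] subf_Fs unfolding subsp_def subf_def
        by (metis diff_0)
      moreover have "w + (-1) * w' = v' + (-1) * v" using h(5) by (simp add: algebra_simps)
      ultimately have "w + (-1) * w' \<in> W \<inter> V i" by simp
      hence "w + (-1) * w' = 0" using WV by blast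
      hence "w = w'" by simp
      thus "w = w' \<and> v = v'" using h(5) by simp
    qed
    have "card W * card (V i) = card ((\<lambda>(w,v). w + v) ` (W \<times> V i))"
      using card_image[OF inj] by (simp add: card_cartesian_product)
    also have "\<dots> \<le> card (UNIV :: 'a set)" by (rule card_mono) auto
    finally have "s^4 * s^3 \<le> s^6" using cardW card_V cardU qs by (simp add: power_mult[symmetric])
    moreover have "s^6 < s^4 * s^3"
    proof -
      have "s^6 * 1 < s^6 * s" using s2 by simp
      thus ?thesis by (simp add: power_add[symmetric] flip: power_Suc2)
    qed
    ultimately show False by simp
  qed
  have j2: "j \<le> 2"
  proof (rule ccontr)
    assume "\<not> j \<le> 2" hence "j \<ge> 3" by simp
    hence "s^3 \<le> s^j" using s2 by (intro power_increasing) auto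
    hence "(s - 1) * card (L \<inter> B i) \<ge> s^3 - 1" using eq by simp
    hence "(s - 1) * card (L \<inter> B i) \<ge> (s - 1) * MM" using s3r unfolding r_def by simp
    hence "card (L \<inter> B i) \<ge> MM" using s2 by simp
    moreover have "MM > q + 1" unfolding MM_def qs using s2 by simp
    ultimately show False using card_LB_le[of i] by linarith
  qed
  have sne: "s - 1 \<noteq> 0" using s2 by simp
  have "j = 1 \<or> j = 2" using j1 j2 by auto
  thus ?thesis
  proof
    assume "j = 1"
    hence "(s - 1) * card (L \<inter> B i) = (s - 1) * 1" using eq by simp
    hence "card (L \<inter> B i) = 1" using mult_left_cancel[OF sne] by blast
    thus ?thesis by blast
  next
    assume "j = 2"
    hence "(s - 1) * card (L \<inter> B i) = (s - 1) * (s + 1)" using eq ar7[of r] s_r unfolding r_def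
      by (simp add: power2_eq_square algebra_simps)
    hence "card (L \<inter> B i) = s + 1" using mult_left_cancel[OF sne] by blast
    thus ?thesis by blast
  qed
qed

end


lemma card_mod_class: "u < t \<Longrightarrow> card {i::nat. i < v * t \<and> i mod t = u} = v"
proof -
  assume u: "u < t"
  have "{i::nat. i < v * t \<and> i mod t = u} = (\<lambda>j. j * t + u) ` {..<v}"
  proof
    show "{i. i < v * t \<and> i mod t = u} \<subseteq> (\<lambda>j. j * t + u) ` {..<v}"
    proof
      fix i assume i: "i \<in> {i. i < v * t \<and> i mod t = u}"
      have "i = (i div t) * t + u" using i div_mult_mod_eq[of i t] by simp
      moreover have "i div t < v" using i by (simp add: less_mult_imp_div_less)
      ultimately show "i \<in> (\<lambda>j. j * t + u) ` {..<v}" by blast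
    qed
  next
    show "(\<lambda>j. j * t + u) ` {..<v} \<subseteq> {i. i < v * t \<and> i mod t = u}"
    proof
      fix i assume "i \<in> (\<lambda>j. j * t + u) ` {..<v}"
      then obtain j where j: "j < v" "i = j * t + u" by blast
      have "j * t + u < (j + 1) * t" using u by simp
      also have "\<dots> \<le> v * t" using j by (intro mult_right_mono) auto
      finally show "i \<in> {i. i < v * t \<and> i mod t = u}" using j u by simp
    qed
  qed
  moreover have "inj_on (\<lambda>j. j * t + u) {..<v}" using u by (auto simp: inj_on_def)
  ultimately show ?thesis by (simp add: card_image)
qed

context PGL begin

abbreviation c where "c i \<equiv> card (L \<inter> B i)"

lemma sum_c: "(\<Sum>i<m. c i) = q + 1"
proof -
  have "L = (\<Union>i<m. L \<inter> B i)"
  proof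
    show "L \<subseteq> (\<Union>i<m. L \<inter> B i)"
    proof
      fix u assume "u \<in> L"
      moreover have "u mod m < m" using m_pos by simp
      ultimately show "u \<in> (\<Union>i<m. L \<inter> B i)" using L_NN unfolding B_def by auto
    qed
  qed auto
  moreover have "card (\<Union>i<m. L \<inter> B i) = (\<Sum>i<m. c i)"
    by (rule card_UN_disjoint) (auto simp: B_def)
  ultimately show ?thesis using card_L by simp
qed

lemma Z_card: "card {i. i < m \<and> c i = s + 1} = 1"
proof -
  let ?Z = "{i. i < m \<and> c i = s + 1}"
  have "(\<Sum>i<m. c i) = (\<Sum>i<m. 1 + (if c i = s + 1 then s else 0))"
    using ci_vals by (intro sum.cong) auto
  also have "\<dots> = m + (\<Sum>i<m. (if c i = s + 1 then s else 0))" unfolding sum.distrib by simp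
  also have "(\<Sum>i<m. (if c i = s + 1 then s else 0)) = (\<Sum>i\<in>{i\<in>{..<m}. c i = s + 1}. s)"
    by (rule sum.inter_filter[symmetric]) simp
  also have "{i\<in>{..<m}. c i = s + 1} = ?Z" by auto
  finally have "m + s * card ?Z = q + 1" using sum_c by simp
  moreover have "m + s = q + 1" using m_eq qs s2 by (simp add: power2_eq_square)
  ultimately have "s * card ?Z = s * 1" by linarith
  moreover have "s \<noteq> 0" using s2 by simp
  ultimately show ?thesis using mult_left_cancel by blast
qed

lemma coprime_pNN: "coprime p NN"
proof (rule prime_imp_coprime[OF pr])
  show "\<not> p dvd NN"
  proof
    assume "p dvd NN"
    have "p dvd q" using qp h1 by (simp add: dvd_power)
    hence "p dvd q^2 + q" by (simp add: power2_eq_square)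
    hence "p dvd 1" using \<open>p dvd NN\<close> unfolding NN_def using dvd_add_right_iff by blast
    thus False using p2 by simp
  qed
qed

lemma coprime_m_p: "coprime m (p - 1)"
proof -
  have "[p = 1] (mod p - 1)" unfolding cong_def using mod_eq_dvd_iff_nat[of 1 p "p-1"] p2 by simp
  hence "[p ^ jj = 1 ^ jj] (mod p - 1)" by (rule cong_pow)
  hence "[s = 1] (mod p - 1)" using s_jj by simp
  hence pr_: "(p - 1) dvd r" unfolding r_def by (rule cong_to_1_nat)
  show ?thesis
  proof (rule coprimeI)
    fix d assume d: "d dvd m" "d dvd p - 1"
    have "d dvd r" using d(2) pr_ by (rule dvd_trans)
    hence "d dvd r * r + r" by simp
    moreover have "d dvd r * r + r + 1" using d(1) unfolding m_def .
    ultimately have "d dvd 1" using dvd_add_right_iff by blast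
    thus "is_unit d" by simp
  qed
qed

lemma tau_inj: "inj_on (tau_map p q) {..<NN}"
proof (rule inj_onI)
  fix u u' assume u: "u \<in> {..<NN}" "u' \<in> {..<NN}" and e: "tau_map p q u = tau_map p q u'"
  have "[u * p = u' * p] (mod NN)" using e unfolding tau_map_def cong_def NN_def by simp
  hence "[u = u'] (mod NN)" using cong_mult_rcancel_nat coprime_pNN by (metis coprime_commute)
  thus "u = u'" using u unfolding cong_def by simp
qed

lemma tau_mono: "i < m \<Longrightarrow> c i \<le> c ((i * p) mod m)"
proof -
  assume i: "i < m"
  have sub: "tau_map p q ` (L \<inter> B i) \<subseteq> L \<inter> B ((i * p) mod m)"
  proof
    fix x assume "x \<in> tau_map p q ` (L \<inter> B i)"
    then obtain u where u: "u \<in> L" "u < NN" "u mod m = i" "x = tau_map p q u" unfolding B_def by auto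
    have "x \<in> L" using u tauL by blast
    moreover have xx: "x = (u * p) mod NN" using u unfolding tau_map_def NN_def by simp
    hence "x < NN" using NN_pos by simp
    moreover have "x mod m = (u * p) mod m" using xx m_dvd_NN by (simp add: mod_mod_cancel)
    hence "x mod m = (i * p) mod m" using u(3) by (metis mod_mult_left_eq)
    ultimately show "x \<in> L \<inter> B ((i * p) mod m)" unfolding B_def by simp
  qed
  have inj: "inj_on (tau_map p q) (L \<inter> B i)" using tau_inj by (rule inj_on_subset) (auto simp: B_def)
  have fin: "finite (L \<inter> B ((i * p) mod m))" unfolding B_def by simp
  show ?thesis by (rule card_inj_on_le[OF inj sub fin])
qed

lemma c_vals: "c 0 = s + 1 \<and> (\<forall>i. 0 < i \<and> i < m \<longrightarrow> c i = 1)"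
proof -
  obtain i0 where Z: "{i. i < m \<and> c i = s + 1} = {i0}" using Z_card by (metis card_1_singletonE)
  have i0: "i0 < m" "c i0 = s + 1" using Z by auto
  define i1 where "i1 = (i0 * p) mod m"
  have i1: "i1 < m" unfolding i1_def using m_pos by simp
  have "c i1 \<ge> s + 1" using tau_mono[OF i0(1)] i0(2) unfolding i1_def by simp
  hence "c i1 = s + 1" using ci_vals[OF i1] s2 by auto
  hence "i1 = i0" using Z i1 by auto
  hence "(i0 * p) mod m = i0 mod m" unfolding i1_def using i0 by simp
  hence "m dvd i0 * p - i0" using p2 by (subst mod_eq_dvd_iff_nat[symmetric]) auto
  moreover have "i0 * p - i0 = i0 * (p - 1)" by (simp add: diff_mult_distrib2)
  ultimately have "m dvd i0 * (p - 1)" by simp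
  hence "m dvd i0" using coprime_m_p by (simp add: coprime_dvd_mult_left_iff)
  hence "i0 = 0" using i0 by (metis dvd_imp_le not_less neq0_conv)
  hence "c 0 = s + 1" using i0 by simp
  moreover have "c i = 1" if "0 < i" "i < m" for i
  proof -
    have "i \<notin> {i0}" using that \<open>i0 = 0\<close> by simp
    hence "c i \<noteq> s + 1" using Z that by auto
    thus ?thesis using ci_vals[OF that(2)] by auto
  qed
  ultimately show ?thesis by blast
qed

end


context PGL begin

lemma wc_sum:
  assumes mv: "m = v * t" and u: "u < t"
  shows "wcount q t L u = (\<Sum>i\<in>{i. i < v * t \<and> i mod t = u}. c i)"
proof -
  have tdm: "t dvd m" using mv by simp
  have "L \<inter> orbit_class q t u = (\<Union>i\<in>{i. i < v * t \<and> i mod t = u}. L \<inter> B i)"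
  proof
    show "L \<inter> orbit_class q t u \<subseteq> (\<Union>i\<in>{i. i < v * t \<and> i mod t = u}. L \<inter> B i)"
    proof
      fix x assume x: "x \<in> L \<inter> orbit_class q t u"
      hence x1: "x < NN" "x mod t = u" "x \<in> L" unfolding orbit_class_def NN_def by auto
      have "x mod m < v * t" using m_pos mv by (metis mod_less_divisor)
      moreover have "(x mod m) mod t = u" using x1 tdm by (simp add: mod_mod_cancel)
      ultimately show "x \<in> (\<Union>i\<in>{i. i < v * t \<and> i mod t = u}. L \<inter> B i)"
        using x1 unfolding B_def by blast
    qed
  next
    show "(\<Union>i\<in>{i. i < v * t \<and> i mod t = u}. L \<inter> B i) \<subseteq> L \<inter> orbit_class q t u"
    proof
      fix x assume "x \<in> (\<Union>i\<in>{i. i < v * t \<and> i mod t = u}. L \<inter> B i)"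
      then obtain i where i: "i mod t = u" "x \<in> L" "x < NN" "x mod m = i" unfolding B_def by blast
      have "x mod t = u" using i tdm by (metis mod_mod_cancel)
      thus "x \<in> L \<inter> orbit_class q t u" using i unfolding orbit_class_def NN_def by simp
    qed
  qed
  moreover have "card (\<Union>i\<in>{i. i < v * t \<and> i mod t = u}. L \<inter> B i) = (\<Sum>i\<in>{i. i < v * t \<and> i mod t = u}. c i)"
    by (rule card_UN_disjoint) (auto simp: B_def)
  ultimately show ?thesis unfolding wcount_def by simp
qed

lemma final:
  assumes v: "v \<ge> 1" and dv: "v * (q + s + 1) dvd q^2 + q + 1"
    and t: "t = (q^2 + q + 1) div (v * (q + s + 1))"
  shows "real t = (real q - real s + 1) / real v
         \<and> wcount q t L 0 = s + v
         \<and> (\<forall>u. 1 \<le> u \<and> u < t \<longrightarrow> wcount q t L u = v)"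
proof -
  have MMq: "q + s + 1 = MM" unfolding MM_def qs by simp
  have NNe: "q^2 + q + 1 = m * MM" using NN_mM unfolding NN_def .
  have MM0: "MM \<noteq> 0" unfolding MM_def by simp
  have "v * MM dvd m * MM" using dv unfolding MMq NNe .
  hence vm: "v dvd m" using MM0 by simp
  have tm: "t = m div v" unfolding t MMq NNe using MM0 by simp
  have mv: "m = v * t" using vm tm by simp
  have t1: "t \<ge> 1" using mv m_pos by (cases t) auto
  have sq: "s \<le> s^2" by (simp add: power2_eq_square)
  have "real m = real q - real s + 1" unfolding m_eq qs using sq by (simp add: of_nat_diff)
  hence r1: "real t = (real q - real s + 1) / real v" using mv v by (simp add: field_simps)
  have vne: "v \<noteq> 0" using v by simp
  have r2: "wcount q t L 0 = s + v"
  proof -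
    let ?I = "{i. i < v * t \<and> i mod t = 0}"
    have I0: "0 \<in> ?I" using t1 v by simp
    have cI: "card ?I = v" using card_mod_class[of 0 t v] t1 by simp
    have "wcount q t L 0 = (\<Sum>i\<in>?I. c i)" using wc_sum[OF mv] t1 by simp
    also have "\<dots> = c 0 + (\<Sum>i\<in>?I - {0}. c i)"
    proof (rule sum.remove)
      show "finite ?I" by (rule finite_subset[of _ "{..<v*t}"]) auto
    qed (rule I0)
    also have "(\<Sum>i\<in>?I - {0}. c i) = (\<Sum>i\<in>?I - {0}. 1)"
      using c_vals mv by (intro sum.cong) auto
    also have "\<dots> = v - 1" using cI I0 by (simp add: card_Diff_singleton)
    finally show ?thesis using c_vals v by simp
  qed
  have r3: "wcount q t L u = v" if u: "1 \<le> u" "u < t" for u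
  proof -
    let ?I = "{i. i < v * t \<and> i mod t = u}"
    have "wcount q t L u = (\<Sum>i\<in>?I. c i)" using wc_sum[OF mv u(2)] .
    also have "\<dots> = (\<Sum>i\<in>?I. 1)"
    proof (rule sum.cong)
      fix i assume "i \<in> ?I"
      hence "0 < i" "i < m" using u mv by (auto intro: Nat.gr0I)
      thus "c i = 1" using c_vals by blast
    qed simp
    also have "\<dots> = v" using card_mod_class[OF u(2)] by simp
    finally show ?thesis .
  qed
  show ?thesis using r1 r2 r3 by blast
qed

end

theorem proposition7:
  fixes \<alpha> :: "'a::{field,finite}" and p h q s v t :: nat and L :: "nat set"
  assumes "prime p" and "h \<ge> 1" and "q = p ^ h"
    and "card (UNIV :: 'a set) = q ^ 3"
    and "primitive_elem \<alpha>"
    and "pg_line q \<alpha> L"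
    and "tau_map p q ` L = L"
    and "q = s ^ 2"
    and "v \<ge> 1"
    and "v * (q + s + 1) dvd q^2 + q + 1"
    and "t = (q^2 + q + 1) div (v * (q + s + 1))"
  shows "real t = (real q - real s + 1) / real v
         \<and> wcount q t L 0 = s + v
         \<and> (\<forall>u. 1 \<le> u \<and> u < t \<longrightarrow> wcount q t L u = v)"
proof -
  obtain W where W: "Fq_subspace q W" "card W = q^2" "L = {u. u < q^2 + q + 1 \<and> \<alpha>^u \<in> W}"
    using assms(6) unfolding pg_line_def by blast
  interpret PGL \<alpha> p h s q W L
    by unfold_locales (use assms W in auto)
  show ?thesis using final assms(9,10,11) by blast
qed

end
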